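(* There exists a single-pass streaming algorithm that, given a multi-armed bandit instance with $K$ arms arriving in a stream and fixed parameters $T$, $K$ with $T>K$, performs $T$ arm pulls with expected regret $\mathbb{E}[R_T]\leq O(K^{1/3}T^{2/3}\log(K))$ and uses a memory of a single extra arm.
   Context: Single-pass streaming multi-armed bandits: there are $K$ arms, each with an unknown reward distribution (supported on $[0,1]$) with mean $\mu_i$; $\mu^*=\max_i\mu_i$. The arms arrive one by one in a stream in an arbitrary order. The algorithm may only pull arms currently stored in its memory (including the arm currently being read); once an arm is not stored or is discarded, it can never be retrieved. The algorithm performs $T$ arm pulls; if $a_1,\dots,a_T$ are the arms pulled, the regret is $R_T=T\mu^*-\sum_{s=1}^T\mu_{a_s}$ and $\mathbb{E}[R_T]$ is its expectation. The $O(\cdot)$ hides an absolute constant. *)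

theory Defs
  imports "HOL-Probability.Probability"
begin

text \<open>Arms are identified with their
  position in the stream (0,...,K-1); since the arrival order is arbitrary and
  we quantify over all instances, this loses no generality.  At any moment the
  algorithm holds the arm currently being read (position pos, if pos < K) and
  at most ONE extra stored arm (sto).  Discarded arms can never be retrieved.\<close>

datatype action = PullCur | PullSto | AdvKeep | AdvStore
  \<comment> \<open>PullCur: pull the arm currently being read; PullSto: pull the stored arm;
     AdvKeep: read the next arm, discarding the current one;
     AdvStore: read the next arm, storing the current one (discarding the old stored arm)\<close>

datatype event = EvCur real | EvSto real | EvKeep | EvStore

text \<open>A deterministic policy maps the observed history to the next action.
  Randomised algorithms are modelled as a pmf over such policies.\<close>
type_synonym policy = "event list \<Rightarrow> action"

record bstate =
  pos :: nat
  sto :: "nat option"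
  cnt :: "nat \<Rightarrow> nat"
  hist :: "event list"
  pulls :: "nat list"

definition init_state :: bstate where
  "init_state = \<lparr>pos = 0, sto = None, cnt = (\<lambda>_. 0), hist = [], pulls = []\<rparr>"

text \<open>Reward table model: omega (i, j) is the reward obtained at the j-th pull
  of arm i.  Execution returns None if the policy attempts an illegal action.\<close>
primrec exec :: "nat \<Rightarrow> nat \<Rightarrow> policy \<Rightarrow> (nat \<times> nat \<Rightarrow> real) \<Rightarrow> nat \<Rightarrow> bstate \<Rightarrow> bstate option" where
  "exec K T \<pi> \<omega> 0 s = (if T \<le> length (pulls s) then Some s else None)"
| "exec K T \<pi> \<omega> (Suc f) s =
    (if T \<le> length (pulls s) then Some s else
     (case \<pi> (hist s) of
        PullCur \<Rightarrow>
          (if pos s < K then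
             (let i = pos s; r = \<omega> (i, cnt s i) in
              exec K T \<pi> \<omega> f (s\<lparr>cnt := (cnt s)(i := Suc (cnt s i)),
                                  hist := hist s @ [EvCur r], pulls := pulls s @ [i]\<rparr>))
           else None)
      | PullSto \<Rightarrow>
          (case sto s of
             None \<Rightarrow> None
           | Some i \<Rightarrow>
             (let r = \<omega> (i, cnt s i) in
              exec K T \<pi> \<omega> f (s\<lparr>cnt := (cnt s)(i := Suc (cnt s i)),
                                  hist := hist s @ [EvSto r], pulls := pulls s @ [i]\<rparr>)))
      | AdvKeep \<Rightarrow>
          (if pos s < K then exec K T \<pi> \<omega> f (s\<lparr>pos := Suc (pos s), hist := hist s @ [EvKeep]\<rparr>)
           else None)
      | AdvStore \<Rightarrow>
          (if pos s < K then
             exec K T \<pi> \<omega> f (s\<lparr>pos := Suc (pos s), sto := Some (pos s), hist := hist s @ [EvStore]\<rparr>)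
           else None)))"

text \<open>Every step either pulls (at most T times) or advances the stream (at most K
  times), so T + K steps of fuel suffice for any legal policy.\<close>
definition run_pulls :: "nat \<Rightarrow> nat \<Rightarrow> policy \<Rightarrow> (nat \<times> nat \<Rightarrow> real) \<Rightarrow> nat list option" where
  "run_pulls K T \<pi> \<omega> = map_option pulls (exec K T \<pi> \<omega> (T + K) init_state)"

definition valid_policy :: "nat \<Rightarrow> nat \<Rightarrow> policy \<Rightarrow> bool" where
  "valid_policy K T \<pi> \<longleftrightarrow> (\<forall>\<omega>. \<exists>ps. run_pulls K T \<pi> \<omega> = Some ps \<and> length ps = T)"

definition mean :: "real measure \<Rightarrow> real" where
  "mean M = (\<integral>x. x \<partial>M)"

definition mu_star :: "(nat \<Rightarrow> real measure) \<Rightarrow> nat \<Rightarrow> real" where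
  "mu_star D K = Max ((\<lambda>i. mean (D i)) ` {..<K})"

definition regret_of :: "(nat \<Rightarrow> real measure) \<Rightarrow> nat \<Rightarrow> nat \<Rightarrow> nat list \<Rightarrow> real" where
  "regret_of D K T ps = real T * mu_star D K - (\<Sum>s<length ps. mean (D (ps ! s)))"

definition realized_regret :: "(nat \<Rightarrow> real measure) \<Rightarrow> nat \<Rightarrow> nat \<Rightarrow> policy \<Rightarrow> (nat \<times> nat \<Rightarrow> real) \<Rightarrow> real" where
  "realized_regret D K T \<pi> \<omega> =
     (case run_pulls K T \<pi> \<omega> of Some ps \<Rightarrow> regret_of D K T ps | None \<Rightarrow> 0)"

definition reward_space :: "(nat \<Rightarrow> real measure) \<Rightarrow> nat \<Rightarrow> nat \<Rightarrow> (nat \<times> nat \<Rightarrow> real) measure" where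
  "reward_space D K T = PiM ({..<K} \<times> {..<T}) (\<lambda>ij. D (fst ij))"

definition bandit_instance :: "(nat \<Rightarrow> real measure) \<Rightarrow> nat \<Rightarrow> bool" where
  "bandit_instance D K \<longleftrightarrow>
     (\<forall>i<K. prob_space (D i) \<and> sets (D i) = sets borel \<and> (AE x in D i. 0 \<le> x \<and> x \<le> 1))"

end

theory Submission
  imports Defs
begin

definition Ssum :: "nat \<Rightarrow> (nat \<times> nat \<Rightarrow> real) \<Rightarrow> nat \<Rightarrow> real" where
  "Ssum m \<omega> i = (\<Sum>j<m. \<omega> (i, j))"

fun ch :: "nat \<Rightarrow> (nat \<times> nat \<Rightarrow> real) \<Rightarrow> nat \<Rightarrow> nat" where
  "ch m \<omega> 0 = 0"
| "ch m \<omega> (Suc n) = (if n = 0 then 0 else if Ssum m \<omega> (ch m \<omega> n) < Ssum m \<omega> n then n else ch m \<omega> n)"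

type_synonym astate = "nat \<times> nat \<times> real \<times> real option"

fun stp :: "event \<Rightarrow> astate \<Rightarrow> astate" where
  "stp (EvCur r) (p, k, s, b) = (p, Suc k, s + r, b)"
| "stp (EvSto r) x = x"
| "stp EvKeep (p, k, s, b) = (Suc p, 0, 0, b)"
| "stp EvStore (p, k, s, b) = (Suc p, 0, 0, Some s)"

fun act :: "nat \<Rightarrow> nat \<Rightarrow> astate \<Rightarrow> action" where
  "act K m (p, k, s, b) = (if p < K then (if k < m then PullCur else
      (case b of None \<Rightarrow> AdvStore | Some b' \<Rightarrow> if b' < s then AdvStore else AdvKeep)) else PullSto)"

definition ainit :: astate where "ainit = (0, 0, 0, None)"

definition pol :: "nat \<Rightarrow> nat \<Rightarrow> policy" where
  "pol K m h = act K m (fold stp h ainit)"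

definition EL :: "nat \<Rightarrow> nat \<Rightarrow> nat list" where
  "EL m i = concat (map (\<lambda>j. replicate m j) [0..<i])"

lemma EL_Suc: "EL m (Suc i) = EL m i @ replicate m i"
  by (simp add: EL_def)

lemma length_EL: "length (EL m i) = i * m"
  by (induction i) (auto simp: EL_Suc EL_def[of m 0])

definition Inv :: "nat \<Rightarrow> (nat \<times> nat \<Rightarrow> real) \<Rightarrow> nat \<Rightarrow> nat \<Rightarrow> bstate \<Rightarrow> bool" where
  "Inv m \<omega> i k st \<longleftrightarrow> pos st = i \<and> cnt st = (\<lambda>j. if j < i then m else if j = i then k else 0)
     \<and> pulls st = EL m i @ replicate k i
     \<and> fold stp (hist st) ainit = (i, k, (\<Sum>j<k. \<omega> (i, j)), if i = 0 then None else Some (Ssum m \<omega> (ch m \<omega> i)))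
     \<and> sto st = (if i = 0 then None else Some (ch m \<omega> i))"

definition Com :: "nat \<Rightarrow> nat \<Rightarrow> (nat \<times> nat \<Rightarrow> real) \<Rightarrow> nat \<Rightarrow> bstate \<Rightarrow> bool" where
  "Com K m \<omega> n st \<longleftrightarrow> pos st = K \<and> sto st = Some (ch m \<omega> K) \<and> fst (fold stp (hist st) ainit) = K
     \<and> pulls st = EL m K @ replicate n (ch m \<omega> K)"

lemma pull_step:
  assumes "Inv m \<omega> i k st" "i < K" "k < m" "K * m < T"
  shows "\<exists>st'. exec K T (pol K m) \<omega> (Suc f) st = exec K T (pol K m) \<omega> f st' \<and> Inv m \<omega> i (Suc k) st'"
proof -
  have "i * m + k < K * m"
  proof -
    have "i * m + k < i * m + m" using assms(3) by simp
    also have "\<dots> = Suc i * m" by simp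
    also have "\<dots> \<le> K * m" using assms(2) by (intro mult_right_mono) auto
    finally show ?thesis .
  qed
  hence len: "\<not> T \<le> length (pulls st)" using assms by (simp add: Inv_def length_EL)
  have a: "pol K m (hist st) = PullCur" using assms by (simp add: Inv_def pol_def)
  show ?thesis
    using assms len a
    by (auto simp: Inv_def fun_eq_iff replicate_append_same[symmetric] simp del: replicate_append_same)
qed

lemma adv_step:
  assumes "Inv m \<omega> i m st" "i < K" "K * m < T"
  shows "\<exists>st'. exec K T (pol K m) \<omega> (Suc f) st = exec K T (pol K m) \<omega> f st' \<and>
     (Suc i < K \<longrightarrow> Inv m \<omega> (Suc i) 0 st') \<and> (Suc i = K \<longrightarrow> Com K m \<omega> 0 st')"
proof -
  have "i * m + m \<le> K * m"
  proof -
    have "i * m + m = Suc i * m" by simp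
    also have "\<dots> \<le> K * m" using assms(2) by (intro mult_right_mono) auto
    finally show ?thesis .
  qed
  hence len: "\<not> T \<le> length (pulls st)" using assms by (simp add: Inv_def length_EL)
  have cnteq: "(\<lambda>j. if j < i then m else if j = i then m else 0) = (\<lambda>j. if j < Suc i then m else if j = Suc i then 0 else (0::nat))"
    by (auto simp: fun_eq_iff)
  show ?thesis
  proof (cases "i = 0")
    case True
    have a: "pol K m (hist st) = AdvStore" using assms True by (simp add: Inv_def pol_def)
    show ?thesis using assms len a True cnteq
      by (auto simp: Inv_def Com_def EL_Suc Ssum_def)
  next
    case False
    show ?thesis
    proof (cases "Ssum m \<omega> (ch m \<omega> i) < Ssum m \<omega> i")
      case True
      have a: "pol K m (hist st) = AdvStore" using assms True \<open>i \<noteq> 0\<close> by (simp add: Inv_def pol_def Ssum_def)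
      show ?thesis using assms len a True cnteq \<open>i \<noteq> 0\<close>
        by (auto simp: Inv_def Com_def EL_Suc Ssum_def)
    next
      case F: False
      have a: "pol K m (hist st) = AdvKeep" using assms F \<open>i \<noteq> 0\<close> by (simp add: Inv_def pol_def Ssum_def)
      show ?thesis using assms len a F cnteq \<open>i \<noteq> 0\<close>
        by (auto simp: Inv_def Com_def EL_Suc Ssum_def)
    qed
  qed
qed

lemma commit:
  assumes "Com K m \<omega> n st" "K * m + n \<le> T" "T - K * m - n \<le> f"
  shows "\<exists>st'. exec K T (pol K m) \<omega> f st = Some st' \<and> pulls st' = EL m K @ replicate (T - K * m) (ch m \<omega> K)"
  using assms
proof (induction f arbitrary: n st)
  case 0
  then have "n = T - K * m" by simp
  with 0 show ?case by (auto simp: Com_def length_EL)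
next
  case (Suc f)
  show ?case
  proof (cases "T \<le> length (pulls st)")
    case True
    then have "n = T - K * m" using Suc.prems by (simp add: Com_def length_EL)
    with Suc.prems True show ?thesis by (auto simp: Com_def)
  next
    case False
    have a: "pol K m (hist st) = PullSto" using Suc.prems
      by (cases "fold stp (hist st) ainit") (simp add: Com_def pol_def)
    define st' where "st' = st\<lparr>cnt := (cnt st)(ch m \<omega> K := Suc (cnt st (ch m \<omega> K))),
        hist := hist st @ [EvSto (\<omega> (ch m \<omega> K, cnt st (ch m \<omega> K)))], pulls := pulls st @ [ch m \<omega> K]\<rparr>"
    have e: "exec K T (pol K m) \<omega> (Suc f) st = exec K T (pol K m) \<omega> f st'"
      using False a Suc.prems by (simp add: Com_def st'_def)
    have c: "Com K m \<omega> (Suc n) st'" using Suc.prems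
      by (simp add: Com_def st'_def replicate_append_same[symmetric] del: replicate_append_same)
    have "K * m + Suc n \<le> T" using False Suc.prems by (simp add: Com_def length_EL)
    from Suc.IH[OF c this] Suc.prems e show ?thesis by simp
  qed
qed


lemma pull_iter:
  assumes "Inv m \<omega> i k st" "i < K" "k \<le> m" "K * m < T"
  shows "\<exists>st'. exec K T (pol K m) \<omega> (f + (m - k)) st = exec K T (pol K m) \<omega> f st' \<and> Inv m \<omega> i m st'"
  using assms
proof (induction "m - k" arbitrary: k st)
  case 0
  then show ?case by auto
next
  case (Suc d)
  then have "k < m" by simp
  from pull_step[OF Suc.prems(1,2) this Suc.prems(4), of "f + d"]
  obtain st1 where st1: "exec K T (pol K m) \<omega> (Suc (f + d)) st = exec K T (pol K m) \<omega> (f + d) st1"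
    "Inv m \<omega> i (Suc k) st1" by blast
  have "d = m - Suc k" using Suc.hyps by simp
  from Suc.hyps(1)[OF this st1(2) Suc.prems(2) _ Suc.prems(4)] \<open>k < m\<close>
  obtain st' where "exec K T (pol K m) \<omega> (f + (m - Suc k)) st1 = exec K T (pol K m) \<omega> f st'" "Inv m \<omega> i m st'"
    by auto
  moreover have "f + (m - k) = Suc (f + d)" using Suc.hyps by simp
  ultimately show ?case using st1 \<open>d = m - Suc k\<close> by auto
qed

lemma explore_all:
  assumes "Inv m \<omega> i 0 st" "i < K" "K * m < T"
  shows "\<exists>st'. exec K T (pol K m) \<omega> (f + (K - i) * Suc m) st = exec K T (pol K m) \<omega> f st' \<and> Com K m \<omega> 0 st'"
  using assms
proof (induction "K - i" arbitrary: i st)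
  case 0
  then show ?case by simp
next
  case (Suc d)
  have fe: "f + (K - i) * Suc m = (f + d * Suc m + 1) + m"
    by (simp only: Suc.hyps(2)[symmetric]) simp
  from pull_iter[OF Suc.prems(1,2) _ Suc.prems(3), of "f + d * Suc m + 1"]
  obtain st1 where st1: "exec K T (pol K m) \<omega> (f + (K - i) * Suc m) st = exec K T (pol K m) \<omega> (Suc (f + d * Suc m)) st1"
     "Inv m \<omega> i m st1" unfolding fe by auto
  from adv_step[OF st1(2) Suc.prems(2,3), of "f + d * Suc m"]
  obtain st2 where st2: "exec K T (pol K m) \<omega> (Suc (f + d * Suc m)) st1 = exec K T (pol K m) \<omega> (f + d * Suc m) st2"
    "Suc i < K \<longrightarrow> Inv m \<omega> (Suc i) 0 st2" "Suc i = K \<longrightarrow> Com K m \<omega> 0 st2" by blast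
  show ?case
  proof (cases "Suc i = K")
    case True
    then have "d = 0" using Suc.hyps by simp
    then show ?thesis using st1 st2 True by auto
  next
    case False
    then have "Suc i < K" using Suc.prems by simp
    have "d = K - Suc i" using Suc.hyps by simp
    from Suc.hyps(1)[OF this st2(2)[rule_format, OF \<open>Suc i < K\<close>] \<open>Suc i < K\<close> Suc.prems(3)]
    show ?thesis using st1 st2 \<open>d = K - Suc i\<close> by auto
  qed
qed

lemma run_pulls_pol:
  assumes "1 \<le> K" "K * m < T"
  shows "run_pulls K T (pol K m) \<omega> = Some (EL m K @ replicate (T - K * m) (ch m \<omega> K))"
proof -
  have i0: "Inv m \<omega> 0 0 init_state"
    by (simp add: Inv_def init_state_def EL_def ainit_def fun_eq_iff)
  have fe: "T + K = (T - K * m) + (K - 0) * Suc m" using assms by simp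
  from explore_all[OF i0 _ assms(2), of "T - K * m"] assms
  obtain st' where "exec K T (pol K m) \<omega> (T + K) init_state = exec K T (pol K m) \<omega> (T - K * m) st'"
    "Com K m \<omega> 0 st'" unfolding fe by auto
  moreover from commit[OF this(2), of T "T - K * m"] assms
  obtain st'' where "exec K T (pol K m) \<omega> (T - K * m) st' = Some st''"
     "pulls st'' = EL m K @ replicate (T - K * m) (ch m \<omega> K)" by auto
  ultimately show ?thesis by (simp add: run_pulls_def)
qed

lemma valid_pol:
  assumes "1 \<le> K" "K * m < T"
  shows "valid_policy K T (pol K m)"
  using assms by (simp add: valid_policy_def run_pulls_pol length_EL)

locale bsetup =
  fixes D :: "nat \<Rightarrow> real measure" and K T m :: nat
  assumes inst: "bandit_instance D K" and K1: "1 \<le> K" and m1: "1 \<le> m" and mT: "m \<le> T"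
begin

definition Idx :: "(nat \<times> nat) set" where "Idx = {..<K} \<times> {..<T}"
definition Mx :: "nat \<times> nat \<Rightarrow> real measure" where
  "Mx ij = (if ij \<in> Idx then D (fst ij) else count_space {undefined})"
abbreviation "M \<equiv> reward_space D K T"
definition mu :: "nat \<Rightarrow> real" where "mu i = mean (D i)"

lemma finI: "finite Idx" by (simp add: Idx_def)

lemma M_eq: "M = PiM Idx Mx"
  unfolding reward_space_def Idx_def[symmetric] by (rule PiM_cong) (auto simp: Mx_def)

lemma D_prob: "i < K \<Longrightarrow> prob_space (D i)" using inst by (simp add: bandit_instance_def)
lemma D_sets: "i < K \<Longrightarrow> sets (D i) = sets borel" using inst by (simp add: bandit_instance_def)
lemma D_AE: "i < K \<Longrightarrow> AE x in D i. 0 \<le> x \<and> x \<le> 1" using inst by (simp add: bandit_instance_def)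

lemma D_ibrv: "i < K \<Longrightarrow> interval_bounded_random_variable (D i) (\<lambda>x. x) 0 1"
  unfolding interval_bounded_random_variable_def interval_bounded_random_variable_axioms_def
  using D_prob D_sets D_AE by (auto simp: measurable_cong_sets[OF D_sets refl])

lemma Mx_prob: "prob_space (Mx ij)"
  by (cases "ij \<in> Idx") (auto simp: Mx_def Idx_def intro: D_prob prob_spaceI)

interpretation P: product_prob_space Mx
  by (rule product_prob_spaceI) (rule Mx_prob)

lemma M_prob: "prob_space M"
  unfolding M_eq by (rule prob_space_PiM) (rule Mx_prob)

lemma mu_bounds: "i < K \<Longrightarrow> 0 \<le> mu i \<and> mu i \<le> 1"
proof -
  assume i: "i < K"
  interpret prob_space "D i" by (rule D_prob[OF i])
  interpret interval_bounded_random_variable "D i" "\<lambda>x. x" 0 1 by (rule D_ibrv[OF i])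
  have "0 \<le> mu i" unfolding mu_def mean_def
    by (rule integral_nonneg_AE) (use D_AE[OF i] in auto)
  moreover have "mu i \<le> 1" unfolding mu_def mean_def
    using integral_mono_AE[of "D i" "\<lambda>x. x" "\<lambda>x. 1"] D_AE[OF i] integrable by (auto elim: eventually_mono simp: prob_space)
  ultimately show ?thesis by simp
qed

lemma comp_meas [measurable]: "ij \<in> Idx \<Longrightarrow> (\<lambda>\<omega>. \<omega> ij) \<in> borel_measurable M"
proof -
  assume ij: "ij \<in> Idx"
  have "(\<lambda>\<omega>. \<omega> ij) \<in> measurable (PiM Idx Mx) (Mx ij)"
    by (rule measurable_component_singleton[OF ij])
  moreover have "sets (Mx ij) = sets borel" using ij D_sets by (auto simp: Mx_def Idx_def)
  ultimately show ?thesis unfolding M_eq using measurable_cong_sets by blast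
qed

lemma prod_int:
  fixes g :: "nat \<times> nat \<Rightarrow> real \<Rightarrow> real"
  assumes "\<And>ij. ij \<in> Idx \<Longrightarrow> integrable (Mx ij) (g ij)"
  shows "integrable M (\<lambda>\<omega>. \<Prod>ij\<in>Idx. g ij (\<omega> ij))"
    "(\<integral>\<omega>. (\<Prod>ij\<in>Idx. g ij (\<omega> ij)) \<partial>M) = (\<Prod>ij\<in>Idx. integral\<^sup>L (Mx ij) (g ij))"
  unfolding M_eq using P.product_integrable_prod[OF finI assms] P.product_integral_prod[OF finI assms] by auto

end

context bsetup begin

interpretation P: product_prob_space Mx
  by (rule product_prob_spaceI) (rule Mx_prob)

lemma prod_slice:
  fixes F :: "nat \<Rightarrow> real"
  assumes i: "i < K"
  shows "(\<Prod>ij\<in>Idx. if fst ij = i \<and> snd ij < m then F (snd ij) else 1) = (\<Prod>j<m. F j)"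
proof -
  let ?G = "\<lambda>ij. if fst ij = i \<and> snd ij < m then F (snd ij) else 1"
  have sub: "(\<lambda>j. (i, j)) ` {..<m} \<subseteq> Idx" using i mT by (auto simp: Idx_def)
  have "prod ?G Idx = prod ?G ((\<lambda>j. (i, j)) ` {..<m})"
    by (rule prod.mono_neutral_right[OF finI sub]) auto
  also have "\<dots> = (\<Prod>j<m. ?G (i, j))"
    by (subst prod.reindex) (auto simp: inj_on_def)
  also have "\<dots> = (\<Prod>j<m. F j)" by simp
  finally show ?thesis .
qed

lemma comp_int:
  assumes i: "i < K" and j: "j < T"
  shows "integrable M (\<lambda>\<omega>. \<omega> (i, j))" "(\<integral>\<omega>. \<omega> (i, j) \<partial>M) = mu i"
proof -
  define g :: "nat \<times> nat \<Rightarrow> real \<Rightarrow> real" where "g ij x = (if ij = (i, j) then x else 1)" for ij x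
  have ij: "(i, j) \<in> Idx" using i j by (simp add: Idx_def)
  interpret Di: interval_bounded_random_variable "D i" "\<lambda>x. x" 0 1 by (rule D_ibrv[OF i])
  have gi: "integrable (Mx ij) (g ij)" if "ij \<in> Idx" for ij
  proof (cases "ij = (i, j)")
    case True
    have "g ij = (\<lambda>x. x)" using True by (simp add: g_def fun_eq_iff)
    then show ?thesis using Di.integrable ij True by (simp add: Mx_def)
  next
    case False
    interpret prob_space "Mx ij" by (rule Mx_prob)
    have "g ij = (\<lambda>x. 1)" using False by (simp add: g_def fun_eq_iff)
    then show ?thesis by simp
  qed
  have gv: "integral\<^sup>L (Mx ij) (g ij) = (if ij = (i, j) then mu i else 1)" if "ij \<in> Idx" for ij
  proof (cases "ij = (i, j)")
    case True
    have "g ij = (\<lambda>x. x)" using True by (simp add: g_def fun_eq_iff)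
    then show ?thesis using ij True by (simp add: Mx_def mu_def mean_def)
  next
    case False
    interpret prob_space "Mx ij" by (rule Mx_prob)
    have "g ij = (\<lambda>x. 1)" using False by (auto simp: g_def fun_eq_iff)
    then show ?thesis using False prob_space.prob_space[OF Mx_prob[of ij]] by simp
  qed
  have pe: "(\<Prod>ij\<in>Idx. g ij (\<omega> ij)) = \<omega> (i, j)" for \<omega>
    using ij finI by (simp add: g_def prod.delta)
  show "integrable M (\<lambda>\<omega>. \<omega> (i, j))" using prod_int(1)[OF gi] by (simp add: pe)
  have "(\<integral>\<omega>. \<omega> (i, j) \<partial>M) = (\<Prod>ij\<in>Idx. integral\<^sup>L (Mx ij) (g ij))"
    using prod_int(2)[OF gi] by (simp add: pe)
  also have "\<dots> = (\<Prod>ij\<in>Idx. if ij = (i, j) then mu i else 1)"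
    by (rule prod.cong) (auto simp: gv)
  also have "\<dots> = mu i" using ij finI by (simp add: prod.delta)
  finally show "(\<integral>\<omega>. \<omega> (i, j) \<partial>M) = mu i" .
qed

lemma mgf:
  assumes i: "i < K" and nu: "0 < \<nu>"
  shows "integrable M (\<lambda>\<omega>. \<Prod>j<m. exp (\<nu> * (\<omega> (i, j) - mu i)))"
    "(\<integral>\<omega>. (\<Prod>j<m. exp (\<nu> * (\<omega> (i, j) - mu i))) \<partial>M) \<le> exp (\<nu>\<^sup>2 / 8) ^ m"
proof -
  define g :: "nat \<times> nat \<Rightarrow> real \<Rightarrow> real" where
    "g ij x = (if fst ij = i \<and> snd ij < m then exp (\<nu> * (x - mu i)) else 1)" for ij x
  interpret Di: interval_bounded_random_variable "D i" "\<lambda>x. x" 0 1 by (rule D_ibrv[OF i])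
  have meas: "(\<lambda>x. exp (\<nu> * (x - mu i))) \<in> borel_measurable (D i)"
    by (simp add: measurable_cong_sets[OF D_sets[OF i] refl])
  have intD: "integrable (D i) (\<lambda>x. exp (\<nu> * (x - mu i)))"
  proof (rule Di.integrable_const_bound[where B = "exp \<nu>"])
    show "AE x in D i. norm (exp (\<nu> * (x - mu i))) \<le> exp \<nu>"
      using D_AE[OF i]
    proof (rule eventually_mono)
      fix x :: real assume "0 \<le> x \<and> x \<le> 1"
      then have "\<nu> * (x - mu i) \<le> \<nu>" using mu_bounds[OF i] nu
        by (intro mult_left_le) auto
      then show "norm (exp (\<nu> * (x - mu i))) \<le> exp \<nu>" by simp
    qed
  qed (rule meas)
  define \<Phi> where "\<Phi> = (\<integral>x. exp (\<nu> * (x - mu i)) \<partial>D i)"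
  have "ennreal \<Phi> = (\<integral>\<^sup>+x. exp (\<nu> * (x - mu i)) \<partial>D i)"
    unfolding \<Phi>_def by (rule nn_integral_eq_integral[symmetric]) (use intD in auto)
  also have "\<dots> \<le> ennreal (exp (\<nu>\<^sup>2 * (1 - 0)\<^sup>2 / 8))"
    using Di.Hoeffdings_lemma_nn_integral[OF nu] by (simp add: mu_def mean_def)
  finally have Phi: "\<Phi> \<le> exp (\<nu>\<^sup>2 / 8)" by (simp add: ennreal_le_iff)
  have gi: "integrable (Mx ij) (g ij)" if "ij \<in> Idx" for ij
  proof (cases "fst ij = i \<and> snd ij < m")
    case True
    have "g ij = (\<lambda>x. exp (\<nu> * (x - mu i)))" using True by (simp add: g_def fun_eq_iff)
    then show ?thesis using intD that True by (simp add: Mx_def)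
  next
    case False
    interpret prob_space "Mx ij" by (rule Mx_prob)
    have "g ij = (\<lambda>x. 1)" using False by (auto simp: g_def fun_eq_iff)
    then show ?thesis by simp
  qed
  have gv: "integral\<^sup>L (Mx ij) (g ij) = (if fst ij = i \<and> snd ij < m then \<Phi> else 1)" if "ij \<in> Idx" for ij
  proof (cases "fst ij = i \<and> snd ij < m")
    case True
    have "g ij = (\<lambda>x. exp (\<nu> * (x - mu i)))" using True by (simp add: g_def fun_eq_iff)
    then show ?thesis using that True by (simp add: Mx_def \<Phi>_def)
  next
    case False
    interpret prob_space "Mx ij" by (rule Mx_prob)
    have "g ij = (\<lambda>x. 1)" using False by (auto simp: g_def fun_eq_iff)
    then show ?thesis using False prob_space.prob_space[OF Mx_prob[of ij]] by auto
  qed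
  have pe: "(\<Prod>ij\<in>Idx. g ij (\<omega> ij)) = (\<Prod>j<m. exp (\<nu> * (\<omega> (i, j) - mu i)))" for \<omega>
  proof -
    have "(\<Prod>ij\<in>Idx. g ij (\<omega> ij)) = (\<Prod>ij\<in>Idx. if fst ij = i \<and> snd ij < m then exp (\<nu> * (\<omega> (i, snd ij) - mu i)) else 1)"
      by (rule prod.cong) (auto simp: g_def)
    then show ?thesis using prod_slice[OF i, of "\<lambda>j. exp (\<nu> * (\<omega> (i, j) - mu i))"] by simp
  qed
  show "integrable M (\<lambda>\<omega>. \<Prod>j<m. exp (\<nu> * (\<omega> (i, j) - mu i)))" using prod_int(1)[OF gi] by (simp add: pe)
  have "(\<integral>\<omega>. (\<Prod>j<m. exp (\<nu> * (\<omega> (i, j) - mu i))) \<partial>M) = (\<Prod>ij\<in>Idx. integral\<^sup>L (Mx ij) (g ij))"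
    using prod_int(2)[OF gi] by (simp add: pe)
  also have "\<dots> = (\<Prod>ij\<in>Idx. if fst ij = i \<and> snd ij < m then \<Phi> else 1)"
    by (rule prod.cong) (auto simp: gv)
  also have "\<dots> = \<Phi> ^ m" using prod_slice[OF i, of "\<lambda>_. \<Phi>"] by simp
  also have "\<dots> \<le> exp (\<nu>\<^sup>2 / 8) ^ m"
    by (rule power_mono[OF Phi]) (simp add: \<Phi>_def integral_nonneg)
  finally show "(\<integral>\<omega>. (\<Prod>j<m. exp (\<nu> * (\<omega> (i, j) - mu i))) \<partial>M) \<le> exp (\<nu>\<^sup>2 / 8) ^ m" .
qed

end

lemma ch_lt: "1 \<le> n \<Longrightarrow> ch m \<omega> n < n"
  by (induction n) auto

lemma ch_max: "1 \<le> n \<Longrightarrow> i < n \<Longrightarrow> Ssum m \<omega> i \<le> Ssum m \<omega> (ch m \<omega> n)"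
proof (induction n arbitrary: i)
  case 0 then show ?case by simp
next
  case (Suc n)
  show ?case
  proof (cases "n = 0")
    case True then show ?thesis using Suc.prems by simp
  next
    case False
    then have ih: "\<And>i. i < n \<Longrightarrow> Ssum m \<omega> i \<le> Ssum m \<omega> (ch m \<omega> n)" using Suc.IH by simp
    show ?thesis
    proof (cases "Ssum m \<omega> (ch m \<omega> n) < Ssum m \<omega> n")
      case True
      then show ?thesis using ih[of i] Suc.prems False by (cases "i = n") auto
    next
      case F: False
      then show ?thesis using ih[of i] Suc.prems False by (cases "i = n") auto
    qed
  qed
qed

context bsetup begin

interpretation P: product_prob_space Mx
  by (rule product_prob_spaceI) (rule Mx_prob)

interpretation PM: prob_space M by (rule M_prob)

lemma Ssum_meas: "i < K \<Longrightarrow> (\<lambda>\<omega>. Ssum m \<omega> i) \<in> borel_measurable M"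
  unfolding Ssum_def using mT
  by (intro borel_measurable_sum comp_meas) (auto simp: Idx_def)

lemma Ssum_int: assumes "i < K"
  shows "integrable M (\<lambda>\<omega>. Ssum m \<omega> i)" "(\<integral>\<omega>. Ssum m \<omega> i \<partial>M) = m * mu i"
proof -
  have j: "j < m \<Longrightarrow> j < T" for j using mT by simp
  show "integrable M (\<lambda>\<omega>. Ssum m \<omega> i)" unfolding Ssum_def
    by (rule Bochner_Integration.integrable_sum, rule comp_int(1)[OF assms]) (use mT in auto)
  have "(\<integral>\<omega>. Ssum m \<omega> i \<partial>M) = (\<Sum>j<m. \<integral>\<omega>. \<omega> (i, j) \<partial>M)" unfolding Ssum_def
    by (rule Bochner_Integration.integral_sum, rule comp_int(1)[OF assms]) (use mT in auto)
  also have "\<dots> = (\<Sum>j<m. mu i)" by (intro sum.cong refl comp_int(2)[OF assms] j) simp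
  finally show "(\<integral>\<omega>. Ssum m \<omega> i \<partial>M) = m * mu i" by simp
qed

lemma ch_meas: "n \<le> K \<Longrightarrow> (\<lambda>\<omega>. ch m \<omega> n) \<in> measurable M (count_space {..<K})"
proof (induction n)
  case 0 then show ?case using K1 by (simp add: measurable_const)
next
  case (Suc n)
  show ?case
  proof (cases "n = 0")
    case True then show ?thesis using K1 by (simp add: measurable_const)
  next
    case False
    have ih: "(\<lambda>\<omega>. ch m \<omega> n) \<in> measurable M (count_space {..<K})" using Suc by simp
    have s1: "(\<lambda>\<omega>. Ssum m \<omega> (ch m \<omega> n)) \<in> borel_measurable M"
      by (rule measurable_compose_countable'[OF _ ih]) (auto intro: Ssum_meas)
    have s2: "(\<lambda>\<omega>. Ssum m \<omega> n) \<in> borel_measurable M" using Suc.prems by (intro Ssum_meas) simp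
    have "{\<omega> \<in> space M. Ssum m \<omega> (ch m \<omega> n) < Ssum m \<omega> n} \<in> sets M"
      using s1 s2 by measurable
    moreover have "(\<lambda>\<omega>. ch m \<omega> (Suc n)) = (\<lambda>\<omega>. if Ssum m \<omega> (ch m \<omega> n) < Ssum m \<omega> n then n else ch m \<omega> n)"
      using False by (simp add: fun_eq_iff)
    ultimately show ?thesis using ih Suc.prems
      by (simp only:) (rule measurable_If, auto simp: measurable_const)
  qed
qed

lemma mu_ch_meas: "(\<lambda>\<omega>. mu (ch m \<omega> K)) \<in> borel_measurable M"
  by (rule measurable_compose[OF ch_meas]) auto

end

context bsetup begin

interpretation PM: prob_space M by (rule M_prob)

definition Y :: "nat \<Rightarrow> (nat \<times> nat \<Rightarrow> real) \<Rightarrow> real" where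
  "Y i \<omega> = Ssum m \<omega> i / m - mu i"

lemma Y_exp: "exp (l * Y i \<omega>) = (\<Prod>j<m. exp ((l / m) * (\<omega> (i, j) - mu i)))"
proof -
  have "(\<Sum>j<m. (l / m) * (\<omega> (i, j) - mu i)) = (l / m) * (\<Sum>j<m. (\<omega> (i, j) - mu i))"
    by (simp add: sum_distrib_left)
  also have "(\<Sum>j<m. (\<omega> (i, j) - mu i)) = Ssum m \<omega> i - m * mu i"
    by (simp add: Ssum_def sum_subtractf)
  also have "(l / m) * (Ssum m \<omega> i - m * mu i) = l * Y i \<omega>"
    using m1 by (simp add: Y_def field_simps)
  finally have "l * Y i \<omega> = (\<Sum>j<m. (l / m) * (\<omega> (i, j) - mu i))" by simp
  then show ?thesis by (simp add: exp_sum)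
qed

lemma Y_mgf: assumes i: "i < K" and l: "0 < l"
  shows "integrable M (\<lambda>\<omega>. exp (l * Y i \<omega>))" "(\<integral>\<omega>. exp (l * Y i \<omega>) \<partial>M) \<le> exp (l\<^sup>2 / (8 * m))"
proof -
  have nu: "0 < l / m" using l m1 by simp
  show "integrable M (\<lambda>\<omega>. exp (l * Y i \<omega>))" unfolding Y_exp using mgf(1)[OF i nu] .
  have "(\<integral>\<omega>. exp (l * Y i \<omega>) \<partial>M) \<le> exp ((l / m)\<^sup>2 / 8) ^ m" unfolding Y_exp using mgf(2)[OF i nu] .
  also have "\<dots> = exp (real m * ((l / m)\<^sup>2 / 8))" using exp_of_nat_mult[of m "(l / m)\<^sup>2 / 8"] by simp
  also have "real m * ((l / m)\<^sup>2 / 8) = l\<^sup>2 / (8 * m)" using m1 by (simp add: power2_eq_square field_simps)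
  finally show "(\<integral>\<omega>. exp (l * Y i \<omega>) \<partial>M) \<le> exp (l\<^sup>2 / (8 * m))" .
qed

lemma Y_int: assumes i: "i < K"
  shows "integrable M (Y i)" "(\<integral>\<omega>. Y i \<omega> \<partial>M) = 0"
proof -
  have Yeq: "Y i = (\<lambda>\<omega>. Ssum m \<omega> i / m - mu i)" by (simp add: Y_def fun_eq_iff)
  show "integrable M (Y i)" unfolding Yeq using Ssum_int(1)[OF i] by auto
  have "(\<integral>\<omega>. Y i \<omega> \<partial>M) = (\<integral>\<omega>. Ssum m \<omega> i \<partial>M) / m - mu i"
    unfolding Yeq using Ssum_int(1)[OF i] by (simp add: PM.prob_space)
  also have "\<dots> = 0" using Ssum_int(2)[OF i] m1 by simp
  finally show "(\<integral>\<omega>. Y i \<omega> \<partial>M) = 0" .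
qed

lemma mustar_eq: "mu_star D K = Max (mu ` {..<K})"
  by (simp add: mu_star_def mu_def)

lemma main_ineq:
  assumes l: "0 < l"
  shows "(\<integral>\<omega>. mu_star D K - mu (ch m \<omega> K) \<partial>M) \<le> ln K / l + l / (8 * m)"
proof -
  have "mu 0 \<in> mu ` {..<K}" using K1 by auto
  then have ne: "mu ` {..<K} \<noteq> {}" by auto
  obtain i0 where i0: "i0 < K" "mu i0 = mu_star D K"
    using Max_in[OF _ ne] unfolding mustar_eq by auto
  define E where "E = exp (l\<^sup>2 / (8 * m))"
  define a where "a = K * E"
  have a0: "0 < a" using K1 by (simp add: a_def E_def)
  define R where "R \<omega> = (ln a - 1) / l - Y i0 \<omega> + (\<Sum>i<K. exp (l * Y i \<omega>)) / (a * l)" for \<omega>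
  have pw: "mu_star D K - mu (ch m \<omega> K) \<le> R \<omega>" for \<omega>
  proof -
    define c where "c = ch m \<omega> K"
    have c: "c < K" using ch_lt[OF K1] by (simp add: c_def)
    have sc: "Ssum m \<omega> i0 \<le> Ssum m \<omega> c" using ch_max[OF K1 i0(1)] by (simp add: c_def)
    have "(Ssum m \<omega> i0) / m \<le> Ssum m \<omega> c / m" using sc m1 by (simp add: divide_right_mono)
    then have d1: "mu_star D K - mu c \<le> Y c \<omega> - Y i0 \<omega>" using i0 by (simp add: Y_def)
    have "1 + (l * Y c \<omega> - ln a) \<le> exp (l * Y c \<omega> - ln a)" by (rule exp_ge_add_one_self)
    also have "\<dots> = exp (l * Y c \<omega>) / a" using a0 by (simp add: exp_diff)
    also have "\<dots> \<le> (\<Sum>i<K. exp (l * Y i \<omega>)) / a"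
      using c a0 by (intro divide_right_mono member_le_sum) auto
    finally have "l * Y c \<omega> \<le> ln a - 1 + (\<Sum>i<K. exp (l * Y i \<omega>)) / a" by simp
    then have "Y c \<omega> \<le> (ln a - 1 + (\<Sum>i<K. exp (l * Y i \<omega>)) / a) / l"
      using l by (simp add: field_simps)
    also have "\<dots> = (ln a - 1) / l + (\<Sum>i<K. exp (l * Y i \<omega>)) / (a * l)"
      using l a0 by (simp add: field_simps)
    finally show ?thesis using d1 unfolding R_def c_def by simp
  qed
  have intS: "integrable M (\<lambda>\<omega>. \<Sum>i<K. exp (l * Y i \<omega>))"
    by (rule Bochner_Integration.integrable_sum) (use Y_mgf(1)[OF _ l] in auto)
  have intR: "integrable M R" unfolding R_def[abs_def]
    using intS Y_int(1)[OF i0(1)] by auto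
  have intL: "integrable M (\<lambda>\<omega>. mu_star D K - mu (ch m \<omega> K))"
  proof (rule PM.integrable_const_bound[where B = 1])
    show "AE \<omega> in M. norm (mu_star D K - mu (ch m \<omega> K)) \<le> 1"
    proof (rule AE_I2)
      fix \<omega>
      have c: "ch m \<omega> K < K" using ch_lt[OF K1] by simp
      have "mu (ch m \<omega> K) \<le> mu_star D K" unfolding mustar_eq using c by (intro Max_ge) auto
      moreover have "mu_star D K \<le> 1" using i0 mu_bounds by (metis)
      moreover have "0 \<le> mu (ch m \<omega> K)" using mu_bounds c by auto
      ultimately show "norm (mu_star D K - mu (ch m \<omega> K)) \<le> 1" by simp
    qed
  qed (use mu_ch_meas in measurable)
  have "(\<integral>\<omega>. mu_star D K - mu (ch m \<omega> K) \<partial>M) \<le> (\<integral>\<omega>. R \<omega> \<partial>M)"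
    by (rule integral_mono[OF intL intR pw])
  also have "(\<integral>\<omega>. R \<omega> \<partial>M) = (ln a - 1) / l - (\<integral>\<omega>. Y i0 \<omega> \<partial>M) + (\<integral>\<omega>. (\<Sum>i<K. exp (l * Y i \<omega>)) \<partial>M) / (a * l)"
    unfolding R_def using intS Y_int(1)[OF i0(1)] by (simp add: PM.prob_space)
  also have "(\<integral>\<omega>. (\<Sum>i<K. exp (l * Y i \<omega>)) \<partial>M) = (\<Sum>i<K. (\<integral>\<omega>. exp (l * Y i \<omega>) \<partial>M))"
    by (rule Bochner_Integration.integral_sum) (use Y_mgf(1)[OF _ l] in auto)
  also have "(\<Sum>i<K. (\<integral>\<omega>. exp (l * Y i \<omega>) \<partial>M)) \<le> (\<Sum>i<K. E)"
    unfolding E_def by (rule sum_mono) (use Y_mgf(2)[OF _ l] in auto)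
  finally have "(\<integral>\<omega>. mu_star D K - mu (ch m \<omega> K) \<partial>M) \<le> (ln a - 1) / l - 0 + (\<Sum>i<K. E) / (a * l)"
    using Y_int(2)[OF i0(1)] a0 l by (simp add: divide_right_mono)
  also have "\<dots> = ln a / l" using a0 l K1 by (simp add: a_def E_def field_simps)
  also have "ln a = ln K + l\<^sup>2 / (8 * m)" using K1 by (simp add: a_def E_def ln_mult)
  also have "(ln K + l\<^sup>2 / (8 * m)) / l = ln K / l + l / (8 * m)"
    using l by (simp add: power2_eq_square field_simps)
  finally show ?thesis .
qed

end

lemma sum_nth_map: "(\<Sum>s<length ps. f (ps ! s)) = sum_list (map f ps)"
  by (simp add: sum_list_sum_nth atLeast0LessThan)

lemma sum_list_EL: "sum_list (map f (EL m K)) = of_nat m * (\<Sum>i<K. f i :: real)"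
  by (induction K) (auto simp: EL_Suc EL_def[of m 0] sum_list_replicate algebra_simps)

lemma ln2_ge: "1 / 2 \<le> ln (2::real)"
proof -
  have "exp (1/2::real) \<le> 2"
  proof (rule ccontr)
    assume "\<not> exp (1/2::real) \<le> 2"
    then have "2 * 2 < exp (1/2::real) * exp (1/2)" by (intro mult_strict_mono) auto
    also have "\<dots> = exp 1" by (simp add: exp_add[symmetric])
    finally show False using exp_le by simp
  qed
  then show ?thesis by (subst ln_ge_iff) auto
qed

context bsetup begin

interpretation PM: prob_space M by (rule M_prob)

lemma regret_formula:
  assumes "K * m < T"
  shows "realized_regret D K T (pol K m) \<omega> =
     m * (\<Sum>i<K. mu_star D K - mu i) + (T - K * m) * (mu_star D K - mu (ch m \<omega> K))"
proof -
  have mm: "(\<lambda>i. mean (D i)) = mu" by (simp add: mu_def fun_eq_iff)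
  have "realized_regret D K T (pol K m) \<omega> = T * mu_star D K - (m * (\<Sum>i<K. mu i) + (T - K * m) * mu (ch m \<omega> K))"
    using assms K1 unfolding realized_regret_def run_pulls_pol[OF K1 assms] regret_of_def
    by (simp only: option.case sum_nth_map[where f = "\<lambda>i. mean (D i)"] mm) (simp add: sum_list_EL sum_list_replicate of_nat_diff)
  also have "\<dots> = m * (\<Sum>i<K. mu_star D K - mu i) + (T - K * m) * (mu_star D K - mu (ch m \<omega> K))"
    using assms by (simp add: sum_subtractf of_nat_diff algebra_simps)
  finally show ?thesis .
qed

lemma intL: "integrable M (\<lambda>\<omega>. mu_star D K - mu (ch m \<omega> K))"
proof (rule PM.integrable_const_bound[where B = 1])
  have "mu 0 \<in> mu ` {..<K}" using K1 by auto
  then have ne: "mu ` {..<K} \<noteq> {}" by auto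
  obtain i0 where i0: "i0 < K" "mu i0 = mu_star D K"
    using Max_in[OF _ ne] unfolding mustar_eq by auto
  show "AE \<omega> in M. norm (mu_star D K - mu (ch m \<omega> K)) \<le> 1"
  proof (rule AE_I2)
    fix \<omega>
    have c: "ch m \<omega> K < K" using ch_lt[OF K1] by simp
    have "mu (ch m \<omega> K) \<le> mu_star D K" unfolding mustar_eq using c by (intro Max_ge) auto
    moreover have "mu_star D K \<le> 1" using i0 mu_bounds by (metis)
    moreover have "0 \<le> mu (ch m \<omega> K)" using mu_bounds c by auto
    ultimately show "norm (mu_star D K - mu (ch m \<omega> K)) \<le> 1" by simp
  qed
qed (use mu_ch_meas in measurable)

lemma regret_meas:
  assumes "K * m < T"
  shows "realized_regret D K T (pol K m) \<in> borel_measurable M"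
proof -
  have "realized_regret D K T (pol K m) = (\<lambda>\<omega>. m * (\<Sum>i<K. mu_star D K - mu i) + (T - K * m) * (mu_star D K - mu (ch m \<omega> K)))"
    using regret_formula[OF assms] by (simp add: fun_eq_iff)
  then show ?thesis using mu_ch_meas by simp
qed

lemma regret_bound:
  assumes "K * m < T" "0 < l"
  shows "(\<integral>\<omega>. realized_regret D K T (pol K m) \<omega> \<partial>M) \<le>
     m * (\<Sum>i<K. mu_star D K - mu i) + (T - K * m) * (ln K / l + l / (8 * m))"
proof -
  have "(\<integral>\<omega>. realized_regret D K T (pol K m) \<omega> \<partial>M) =
     m * (\<Sum>i<K. mu_star D K - mu i) + (T - K * m) * (\<integral>\<omega>. mu_star D K - mu (ch m \<omega> K) \<partial>M)"
    unfolding regret_formula[OF assms(1)] using intL by (simp add: PM.prob_space)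
  also have "\<dots> \<le> m * (\<Sum>i<K. mu_star D K - mu i) + (T - K * m) * (ln K / l + l / (8 * m))"
    using main_ineq[OF assms(2)] by (intro add_left_mono mult_left_mono) auto
  finally show ?thesis .
qed

lemma gap_bound: "(\<Sum>i<K. mu_star D K - mu i) \<le> K"
proof -
  have "mu 0 \<in> mu ` {..<K}" using K1 by auto
  then have ne: "mu ` {..<K} \<noteq> {}" by auto
  obtain i0 where i0: "i0 < K" "mu i0 = mu_star D K"
    using Max_in[OF _ ne] unfolding mustar_eq by auto
  have "(\<Sum>i<K. mu_star D K - mu i) \<le> (\<Sum>i<K. 1)"
    using i0 mu_bounds by (intro sum_mono) (metis diff_le_eq add_increasing2 order_trans lessThan_iff add.commute)
  then show ?thesis by simp
qed

lemma K1_zero: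
  assumes "K = 1" "K * m < T" shows "realized_regret D K T (pol K m) \<omega> = 0"
proof -
  have "realized_regret D K T (pol K m) \<omega> =
     m * (\<Sum>i<K. mu_star D K - mu i) + (T - K * m) * (mu_star D K - mu (ch m \<omega> K))"
    by (rule regret_formula[OF assms(2)])
  also have "\<dots> = 0" unfolding mustar_eq using assms(1) by (simp add: lessThan_Suc)
  finally show ?thesis .
qed

end

theorem proposition5p3:
  shows "\<exists>C::real. \<forall>K T::nat. 1 \<le> K \<and> K < T \<longrightarrow>
    (\<exists>A :: policy pmf.
       (\<forall>\<pi>\<in>set_pmf A. valid_policy K T \<pi>) \<and>
       (\<forall>D. bandit_instance D K \<longrightarrow>
          (\<forall>\<pi>\<in>set_pmf A. realized_regret D K T \<pi> \<in> borel_measurable (reward_space D K T)) \<and>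
          measure_pmf.expectation A
             (\<lambda>\<pi>. \<integral>\<omega>. realized_regret D K T \<pi> \<omega> \<partial>(reward_space D K T))
            \<le> C * real K powr (1/3) * real T powr (2/3) * ln (real K)))"
proof (intro exI[of _ 4] allI impI)
  fix K T :: nat
  assume KT: "1 \<le> K \<and> K < T"
  define q where "q = (real T / real K) powr (1/3)"
  have q0: "0 < q" using KT by (simp add: q_def)
  have q3: "q ^ 3 = real T / real K"
  proof -
    have "q ^ 3 = q powr 3" using q0 powr_realpow[of q 3] by simp
    also have "\<dots> = (real T / real K) powr (1/3 * 3)" unfolding q_def by (rule powr_powr)
    also have "\<dots> = real T / real K" using KT by simp
    finally show ?thesis .
  qed
  have TKq: "real T = real K * q ^ 3" using KT q3 by simp
  have q1: "1 < q"
  proof (rule ccontr)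
    assume "\<not> 1 < q"
    then have "q ^ 3 \<le> 1" using q0 by (intro power_le_one) auto
    then show False using q3 KT by (simp add: field_simps)
  qed
  define m where "m = nat \<lfloor>q\<^sup>2\<rfloor>"
  have q21: "1 \<le> q\<^sup>2" using q1 by simp
  have mle: "real m \<le> q\<^sup>2" using q21 by (simp add: m_def)
  have mgt: "q\<^sup>2 < real m + 1" using q21 by (simp add: m_def)
  have "(1::int) \<le> \<lfloor>q\<^sup>2\<rfloor>" using q21 le_floor_iff[of 1 "q\<^sup>2"] by simp
  from nat_mono[OF this] have m1: "1 \<le> m" by (simp add: m_def)
  have mhalf: "q\<^sup>2 \<le> 2 * real m" using mgt m1 by simp
  have "real (K * m) \<le> real K * q\<^sup>2" using mle by (simp add: mult_left_mono)
  also have "\<dots> < real K * q ^ 3" using KT q1 q0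
    by (intro mult_strict_left_mono) (auto simp: power_strict_increasing)
  finally have Km: "K * m < T" using TKq by linarith
  have mT: "m \<le> T" using Km KT by (metis le_trans less_imp_le_nat mult_le_mono1 mult_1 )
  have Kq: "real K powr (1/3) * real T powr (2/3) = real K * q\<^sup>2"
  proof -
    have "q\<^sup>2 = q powr 2" using q0 powr_realpow[of q 2] by simp
    also have "\<dots> = (real T / real K) powr (1/3 * 2)" unfolding q_def by (rule powr_powr)
    also have "\<dots> = real T powr (2/3) / real K powr (2/3)" using KT by (simp add: powr_divide)
    finally have e1: "real K * q\<^sup>2 = real K * (real T powr (2/3) / real K powr (2/3))" by simp
    have e2: "real K powr (1/3) * real K powr (2/3) = real K"
      using KT powr_add[of "real K" "1/3" "2/3"] by simp
    have "real K * (real T powr (2/3) / real K powr (2/3)) =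
        (real K powr (1/3) * real K powr (2/3)) * (real T powr (2/3) / real K powr (2/3))"
      by (simp only: e2)
    also have "\<dots> = real K powr (1/3) * real T powr (2/3)" using KT by simp
    finally have "real K * q\<^sup>2 = real K powr (1/3) * real T powr (2/3)" using e1 by simp
    then show ?thesis by simp
  qed
  show "\<exists>A :: policy pmf.
       (\<forall>\<pi>\<in>set_pmf A. valid_policy K T \<pi>) \<and>
       (\<forall>D. bandit_instance D K \<longrightarrow>
          (\<forall>\<pi>\<in>set_pmf A. realized_regret D K T \<pi> \<in> borel_measurable (reward_space D K T)) \<and>
          measure_pmf.expectation A
             (\<lambda>\<pi>. \<integral>\<omega>. realized_regret D K T \<pi> \<omega> \<partial>(reward_space D K T))
            \<le> 4 * real K powr (1/3) * real T powr (2/3) * ln (real K))"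
  proof (intro exI[of _ "return_pmf (pol K m)"] conjI allI impI ballI)
    fix \<pi> assume "\<pi> \<in> set_pmf (return_pmf (pol K m))"
    then show "valid_policy K T \<pi>" using valid_pol[of K m T] KT Km by simp
  next
    fix D \<pi> assume D: "bandit_instance D K" and "\<pi> \<in> set_pmf (return_pmf (pol K m))"
    interpret bsetup D K T m using D KT m1 mT by unfold_locales auto
    show "realized_regret D K T \<pi> \<in> borel_measurable (reward_space D K T)"
      using regret_meas[OF Km] \<open>\<pi> \<in> _\<close> by simp
  next
    fix D assume D: "bandit_instance D K"
    interpret bsetup D K T m using D KT m1 mT by unfold_locales auto
    have "measure_pmf.expectation (return_pmf (pol K m))
             (\<lambda>\<pi>. \<integral>\<omega>. realized_regret D K T \<pi> \<omega> \<partial>(reward_space D K T))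
       = (\<integral>\<omega>. realized_regret D K T (pol K m) \<omega> \<partial>(reward_space D K T))" by simp
    also have "\<dots> \<le> 4 * (real K * q\<^sup>2) * ln (real K)"
    proof (cases "K = 1")
      case True
      then show ?thesis using K1_zero[OF True Km] by simp
    next
      case False
      then have K2: "2 \<le> K" using KT by simp
      define L where "L = ln (real K)"
      have "ln 2 \<le> ln (real K)" using K2 by simp
      then have L2: "1/2 \<le> L" unfolding L_def using ln2_ge by linarith
      define l where "l = 2 * q * L"
      have l0: "0 < l" using q0 L2 by (simp add: l_def)
      have L0: "0 < L" using L2 by simp
      have "(\<integral>\<omega>. realized_regret D K T (pol K m) \<omega> \<partial>M) \<le>
         m * (\<Sum>i<K. mu_star D K - mu i) + (T - K * m) * (L / l + l / (8 * m))"
        using regret_bound[OF Km l0] by (simp add: L_def)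
      also have "\<dots> \<le> real m * real K + T * (L / l + l / (8 * m))"
      proof (rule add_mono)
        show "real m * (\<Sum>i<K. mu_star D K - mu i) \<le> real m * real K"
          using gap_bound by (intro mult_left_mono) auto
        show "real (T - K * m) * (L / l + l / (8 * m)) \<le> T * (L / l + l / (8 * m))"
          using l0 L2 m1 by (intro mult_right_mono) auto
      qed
      finally have A: "(\<integral>\<omega>. realized_regret D K T (pol K m) \<omega> \<partial>M) \<le> real m * real K + T * (L / l) + T * (l / (8 * m))"
        by (simp add: distrib_left)
      have B: "T * (L / l) = real K * q\<^sup>2 / 2"
        unfolding TKq l_def using q0 L0 by (simp add: power2_eq_square power3_eq_cube)
      have B2: "T * (l / (8 * m)) = real K * q ^ 4 * L / (4 * m)"
        unfolding TKq l_def using q0 L0 m1 by (simp add: power2_eq_square power3_eq_cube power4_eq_xxxx)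
      have C: "real K * q ^ 4 * L / (4 * m) \<le> real K * q\<^sup>2 * L / 2"
      proof -
        have "real K * q ^ 4 * L = (real K * q\<^sup>2 * L) * q\<^sup>2" by (simp add: power2_eq_square power4_eq_xxxx)
        also have "\<dots> \<le> (real K * q\<^sup>2 * L) * (2 * m)" using mhalf L0 KT by (intro mult_left_mono) auto
        also have "(real K * q\<^sup>2 * L) * (2 * m) = (real K * q\<^sup>2 * L / 2) * (4 * m)" by simp
        finally have "real K * q ^ 4 * L \<le> (real K * q\<^sup>2 * L / 2) * (4 * m)" .
        moreover have "0 < 4 * real m" using m1 by simp
        ultimately show ?thesis by (simp only: pos_divide_le_eq)
      qed
      have Dm: "real m * real K \<le> real K * q\<^sup>2" using mle by (simp add: mult.commute mult_left_mono)
      have "(\<integral>\<omega>. realized_regret D K T (pol K m) \<omega> \<partial>M) \<le> real K * q\<^sup>2 + real K * q\<^sup>2 / 2 + real K * q\<^sup>2 * L / 2"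
      proof -
        have "real m * real K + T * (L / l) + T * (l / (8 * m)) \<le> real K * q\<^sup>2 + real K * q\<^sup>2 / 2 + real K * q\<^sup>2 * L / 2"
          using Dm C by (intro add_mono) (auto simp only: B B2)
        then show ?thesis using A by (rule order_trans[rotated])
      qed
      also have "\<dots> = real K * q\<^sup>2 * (3/2 + L/2)" by (simp add: algebra_simps)
      also have "\<dots> \<le> real K * q\<^sup>2 * (4 * L)" using L2 KT by (intro mult_left_mono) auto
      finally show ?thesis by (simp add: L_def)
    qed
    also have "\<dots> = 4 * real K powr (1/3) * real T powr (2/3) * ln (real K)"
      by (simp add: Kq)
    finally show "measure_pmf.expectation (return_pmf (pol K m))
             (\<lambda>\<pi>. \<integral>\<omega>. realized_regret D K T \<pi> \<omega> \<partial>(reward_space D K T))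
            \<le> 4 * real K powr (1/3) * real T powr (2/3) * ln (real K)" .
  qed
qed

end
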